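(* Let $n\ge 2$, $b>0$, and let $p_0,\dots,p_{n-2}$ be complex-valued, $C^\infty$, $b$-periodic functions on $\mathbb{R}$; let $\mathcal{L}u := u^{(n)}+\sum_{k=0}^{n-2}p_k(x)u^{(k)}$. Consider the multipoint eigenvalue problem $$\mathcal{L}u=\lambda u,\qquad u(0)=u(b)=u(2b)=\cdots=u((n-1)b)=0 .$$ Let $\mu$ be an eigenvalue of this problem (i.e. it has a nontrivial solution for $\lambda=\mu$) and let $\mathcal{D}_\mu$ be the vector space of its solutions for $\lambda=\mu$ (the eigenspace). Then $\mathcal{D}_\mu$ has a basis consisting of Floquet solutions (pure, i.e. of rank $1$, and possibly generalized, i.e. of rank $\ge 2$) of $\mathcal{L}u=\mu u$. Moreover, if a Floquet solution $\psi^l$ of rank $l\ge 2$ associated to a multiplier $r$ belongs to $\mathcal{D}_\mu$, then the Floquet solution $\psi^{l-1}$ of rank $l-1$ associated to $r$ for which $\psi^l(x+b)=r\psi^l(x)+\psi^{l-1}(x)$ for all $x$ also belongs to $\mathcal{D}_\mu$.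
   Context: Floquet solutions (for fixed $\lambda$): a nontrivial solution $u^1$ of $\mathcal{L}u=\lambda u$ with $u^1(x+b)=r\,u^1(x)$ for all $x\in\mathbb{R}$ is a (pure) Floquet solution of rank $1$ associated to the multiplier $r$. For $l\ge 2$, a solution $u^l$ of $\mathcal{L}u=\lambda u$ is a (generalized) Floquet solution of rank $l$ associated to $r$ if there is a Floquet solution $u^{l-1}$ of rank $l-1$ associated to $r$ such that $u^l(x+b)=r\,u^l(x)+u^{l-1}(x)$ for all $x\in\mathbb{R}$. The multipliers $r$ are the eigenvalues of the map $f(x)\mapsto f(x+b)$ on the $n$-dimensional solution space of $\mathcal{L}u=\lambda u$. *)

theory Defs
  imports "HOL-Analysis.Analysis"
begin

fun vdiff :: "nat \<Rightarrow> (real \<Rightarrow> complex) \<Rightarrow> real \<Rightarrow> complex" where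
  "vdiff 0 f = f"
| "vdiff (Suc k) f = (\<lambda>x. vector_derivative (vdiff k f) (at x))"

definition smooth_fun :: "(real \<Rightarrow> complex) \<Rightarrow> bool" where
  "smooth_fun f \<longleftrightarrow> (\<forall>k x. vdiff k f differentiable (at x))"

definition is_sol :: "nat \<Rightarrow> (nat \<Rightarrow> real \<Rightarrow> complex) \<Rightarrow> complex \<Rightarrow> (real \<Rightarrow> complex) \<Rightarrow> bool" where
  "is_sol n p lam u \<longleftrightarrow>
     (\<forall>k<n. \<forall>x. vdiff k u differentiable (at x)) \<and>
     (\<forall>x. vdiff n u x + (\<Sum>k\<le>n-2. p k x * vdiff k u x) = lam * u x)"

inductive floquet :: "nat \<Rightarrow> (nat \<Rightarrow> real \<Rightarrow> complex) \<Rightarrow> real \<Rightarrow> complex \<Rightarrow> complex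
    \<Rightarrow> nat \<Rightarrow> (real \<Rightarrow> complex) \<Rightarrow> bool"
  for n p b lam r where
  rank1: "\<lbrakk>is_sol n p lam u; u \<noteq> (\<lambda>x. 0); \<forall>x. u (x + b) = r * u x\<rbrakk>
          \<Longrightarrow> floquet n p b lam r 1 u"
| rankSuc: "\<lbrakk>is_sol n p lam u; floquet n p b lam r l v; l \<ge> 1;
             \<forall>x. u (x + b) = r * u x + v x\<rbrakk>
          \<Longrightarrow> floquet n p b lam r (Suc l) u"

definition eigspace :: "nat \<Rightarrow> (nat \<Rightarrow> real \<Rightarrow> complex) \<Rightarrow> real \<Rightarrow> complex \<Rightarrow> (real \<Rightarrow> complex) set" where
  "eigspace n p b lam = {u. is_sol n p lam u \<and> (\<forall>j<n. u (real j * b) = 0)}"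

end

theory Submission
  imports Defs "HOL-Library.Function_Algebras" "HOL-Computational_Algebra.Polynomial_Factorial" "HOL-Computational_Algebra.Field_as_Ring"
    "HOL-Computational_Algebra.Fundamental_Theorem_Algebra"
begin

definition polyT :: "real \<Rightarrow> complex poly \<Rightarrow> (real \<Rightarrow> complex) \<Rightarrow> real \<Rightarrow> complex" where
  "polyT b q w = (\<lambda>x. \<Sum>i\<le>degree q. coeff q i * w (x + real i * b))"

lemma polyT_sum:
  assumes "degree q \<le> N"
  shows "polyT b q w x = (\<Sum>i\<le>N. coeff q i * w (x + real i * b))"
  unfolding polyT_def
  by (rule sum.mono_neutral_left) (use assms in \<open>auto simp: coeff_eq_0\<close>)

lemma polyT_add: "polyT b (p + q) w x = polyT b p w x + polyT b q w x"
proof -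
  let ?N = "max (degree p) (degree q)"
  have "degree (p+q) \<le> ?N" using degree_add_le by (metis max.cobounded1 max.cobounded2)
  then show ?thesis
    by (simp add: polyT_sum[of _ ?N] sum.distrib distrib_right)
qed

lemma polyT_smult: "polyT b (smult a q) w x = a * polyT b q w x"
  by (simp add: polyT_sum[of _ "degree q"] sum_distrib_left mult.assoc)

lemma polyT_pCons0: "polyT b (pCons 0 p) w x = polyT b p w (x + b)"
proof -
  have "polyT b (pCons 0 p) w x = (\<Sum>i\<le>Suc (degree p). coeff (pCons 0 p) i * w (x + real i * b))"
    by (rule polyT_sum) (simp add: degree_pCons_le)
  also have "\<dots> = (\<Sum>i\<le>degree p. coeff p i * w (x + real (Suc i) * b))"
    by (subst sum.atMost_Suc_shift) simp
  also have "\<dots> = polyT b p w (x + b)"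
    by (simp add: polyT_def algebra_simps)
  finally show ?thesis .
qed

lemma polyT_const: "polyT b [:a:] w x = a * w x"
  by (simp add: polyT_def)

lemma polyT_0 [simp]: "polyT b 0 w = (\<lambda>x. 0)"
  by (simp add: polyT_def fun_eq_iff)

lemma polyT_1 [simp]: "polyT b 1 w = w"
  by (simp add: polyT_def fun_eq_iff one_pCons)

lemma polyT_zero_fun [simp]: "polyT b q (\<lambda>x. 0) = (\<lambda>x. 0)"
  by (simp add: polyT_def fun_eq_iff)

lemma polyT_mult: "polyT b (p * q) w = polyT b p (polyT b q w)"
proof (induction p rule: pCons_induct)
  case 0
  then show ?case by simp
next
  case (pCons a p)
  have e: "pCons a p = [:a:] + pCons 0 p" by simp
  show ?case
  proof
    fix x
    have "polyT b (pCons a p * q) w x = polyT b (smult a q + pCons 0 (p * q)) w x"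
      by simp
    also have "\<dots> = a * polyT b q w x + polyT b p (polyT b q w) (x + b)"
      by (simp add: polyT_add polyT_smult polyT_pCons0 pCons.IH)
    also have "\<dots> = polyT b (pCons a p) (polyT b q w) x"
      by (subst e, simp only: polyT_add polyT_const polyT_pCons0)
    finally show "polyT b (pCons a p * q) w x = polyT b (pCons a p) (polyT b q w) x" .
  qed
qed


lemma vdiff_lincomb:
  assumes "finite I" "\<forall>i\<in>I. \<forall>j<k. \<forall>x. vdiff j (f i) differentiable (at x)"
  shows "vdiff k (\<lambda>x. \<Sum>i\<in>I. c i * f i x) = (\<lambda>x. \<Sum>i\<in>I. c i * vdiff k (f i) x)"
  using assms(2)
proof (induction k)
  case 0
  then show ?case by simp
next
  case (Suc k)
  have IH: "vdiff k (\<lambda>x. \<Sum>i\<in>I. c i * f i x) = (\<lambda>x. \<Sum>i\<in>I. c i * vdiff k (f i) x)"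
    using Suc by auto
  show ?case
  proof
    fix x
    have "((\<lambda>x. \<Sum>i\<in>I. c i * vdiff k (f i) x) has_vector_derivative
           (\<Sum>i\<in>I. c i * vdiff (Suc k) (f i) x)) (at x)"
      apply (rule has_vector_derivative_sum)
      apply (rule has_vector_derivative_mult_right)
      using Suc.prems by (auto intro!: vector_derivative_works[THEN iffD1])
    then show "vdiff (Suc k) (\<lambda>x. \<Sum>i\<in>I. c i * f i x) x = (\<Sum>i\<in>I. c i * vdiff (Suc k) (f i) x)"
      by (simp add: IH vector_derivative_at)
  qed
qed

lemma vdiff_lincomb_diff:
  assumes "finite I" "\<forall>i\<in>I. \<forall>j<k. \<forall>x. vdiff j (f i) differentiable (at x)" "j < k"
  shows "vdiff j (\<lambda>x. \<Sum>i\<in>I. c i * f i x) differentiable (at x)"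
proof -
  have e: "vdiff j (\<lambda>x. \<Sum>i\<in>I. c i * f i x) = (\<lambda>x. \<Sum>i\<in>I. c i * vdiff j (f i) x)"
    by (rule vdiff_lincomb) (use assms in auto)
  have "((\<lambda>x. \<Sum>i\<in>I. c i * vdiff j (f i) x) has_vector_derivative
           (\<Sum>i\<in>I. c i * vdiff (Suc j) (f i) x)) (at x)"
      apply (rule has_vector_derivative_sum)
      apply (rule has_vector_derivative_mult_right)
      using assms by (auto intro!: vector_derivative_works[THEN iffD1])
  then show ?thesis unfolding e by (rule differentiableI_vector)
qed

lemma vdiff_shift:
  assumes "\<forall>j<k. \<forall>x. vdiff j u differentiable (at x)"
  shows "vdiff k (\<lambda>x. u (x + s)) = (\<lambda>x. vdiff k u (x + s))"
  using assms
proof (induction k)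
  case 0
  then show ?case by simp
next
  case (Suc k)
  have IH: "vdiff k (\<lambda>x. u (x + s)) = (\<lambda>x. vdiff k u (x + s))" using Suc by auto
  show ?case
  proof
    fix x
    have d: "(vdiff k u has_vector_derivative vdiff (Suc k) u (x + s)) (at (x + s))"
      using Suc.prems by (auto intro!: vector_derivative_works[THEN iffD1])
    have sh: "((\<lambda>x. x + s) has_vector_derivative 1) (at x)"
      by (auto intro!: derivative_eq_intros simp: has_real_derivative_iff_has_vector_derivative[symmetric])
    have "((\<lambda>x. vdiff k u (x + s)) has_vector_derivative vdiff (Suc k) u (x + s)) (at x)"
      using vector_diff_chain_at[OF sh, of "vdiff k u" "vdiff (Suc k) u (x + s)"] d
      by (simp add: o_def)
    then show "vdiff (Suc k) (\<lambda>x. u (x + s)) x = vdiff (Suc k) u (x + s)"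
      by (simp add: IH vector_derivative_at)
  qed
qed


lemma is_sol_lincomb:
  assumes "finite I" "\<forall>i\<in>I. is_sol n p lam (f i)"
  shows "is_sol n p lam (\<lambda>x. \<Sum>i\<in>I. c i * f i x)"
proof -
  have d: "\<forall>i\<in>I. \<forall>j<n. \<forall>x. vdiff j (f i) differentiable (at x)"
    using assms(2) by (auto simp: is_sol_def)
  have e: "\<And>k. k \<le> n \<Longrightarrow> vdiff k (\<lambda>x. \<Sum>i\<in>I. c i * f i x) = (\<lambda>x. \<Sum>i\<in>I. c i * vdiff k (f i) x)"
    by (rule vdiff_lincomb) (use assms(1) d in auto)
  have eq: "\<forall>i\<in>I. \<forall>x. vdiff n (f i) x + (\<Sum>k\<le>n-2. p k x * vdiff k (f i) x) = lam * f i x"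
    using assms(2) by (auto simp: is_sol_def)
  show ?thesis
    unfolding is_sol_def
  proof (intro conjI allI impI)
    fix k x assume "k < n"
    then show "vdiff k (\<lambda>x. \<Sum>i\<in>I. c i * f i x) differentiable (at x)"
      using vdiff_lincomb_diff[OF assms(1) d] by auto
  next
    fix x
    have "vdiff n (\<lambda>x. \<Sum>i\<in>I. c i * f i x) x + (\<Sum>k\<le>n-2. p k x * vdiff k (\<lambda>x. \<Sum>i\<in>I. c i * f i x) x)
        = (\<Sum>i\<in>I. c i * vdiff n (f i) x) + (\<Sum>k\<le>n-2. p k x * (\<Sum>i\<in>I. c i * vdiff k (f i) x))"
      using e by simp
    also have "\<dots> = (\<Sum>i\<in>I. c i * (vdiff n (f i) x + (\<Sum>k\<le>n-2. p k x * vdiff k (f i) x)))"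
      by (simp add: sum_distrib_left sum.distrib distrib_left algebra_simps sum.swap[of _ "{..n-2}"])
    also have "\<dots> = (\<Sum>i\<in>I. c i * (lam * f i x))"
      using eq by simp
    also have "\<dots> = lam * (\<Sum>i\<in>I. c i * f i x)"
      by (simp add: sum_distrib_left algebra_simps)
    finally show "vdiff n (\<lambda>x. \<Sum>i\<in>I. c i * f i x) x + (\<Sum>k\<le>n-2. p k x * vdiff k (\<lambda>x. \<Sum>i\<in>I. c i * f i x) x) = lam * (\<Sum>i\<in>I. c i * f i x)" .
  qed
qed

lemma is_sol_shift:
  assumes "is_sol n p lam u" "\<forall>k\<le>n-2. \<forall>x. p k (x + s) = p k x"
  shows "is_sol n p lam (\<lambda>x. u (x + s))"
proof -
  have d: "\<forall>j<n. \<forall>x. vdiff j u differentiable (at x)"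
    using assms(1) by (auto simp: is_sol_def)
  have e: "\<And>k. k \<le> n \<Longrightarrow> vdiff k (\<lambda>x. u (x + s)) = (\<lambda>x. vdiff k u (x + s))"
    by (rule vdiff_shift) (use d in auto)
  show ?thesis
    unfolding is_sol_def
  proof (intro conjI allI impI)
    fix k x assume k: "k < n"
    have "((\<lambda>x. x + s) has_vector_derivative 1) (at x)"
      by (auto intro!: derivative_eq_intros simp: has_real_derivative_iff_has_vector_derivative[symmetric])
    moreover have "(vdiff k u has_vector_derivative vector_derivative (vdiff k u) (at (x+s))) (at (x + s))"
      using d k by (auto intro!: vector_derivative_works[THEN iffD1])
    ultimately have "((\<lambda>x. vdiff k u (x + s)) has_vector_derivative vector_derivative (vdiff k u) (at (x+s))) (at x)"
      using vector_diff_chain_at by (fastforce simp: o_def)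
    then show "vdiff k (\<lambda>x. u (x + s)) differentiable (at x)"
      using e[of k] k by (auto intro: differentiableI_vector)
  next
    fix x
    show "vdiff n (\<lambda>x. u (x + s)) x + (\<Sum>k\<le>n - 2. p k x * vdiff k (\<lambda>x. u (x + s)) x) = lam * u (x + s)"
    proof -
      have "(\<Sum>k\<le>n - 2. p k x * vdiff k (\<lambda>x. u (x + s)) x) = (\<Sum>k\<le>n - 2. p k (x+s) * vdiff k u (x + s))"
        using assms(2) e by (intro sum.cong) auto
      then show ?thesis using assms(1) e[of n] unfolding is_sol_def by auto
    qed
  qed
qed

lemma per_mult:
  assumes "\<forall>x. f (x + b) = (f x :: complex)"
  shows "f (x + real i * b) = f x"
proof (induction i)
  case 0 then show ?case by simp
next
  case (Suc i)
  have "f (x + real (Suc i) * b) = f ((x + real i * b) + b)" by (simp add: algebra_simps)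
  then show ?case using assms Suc by simp
qed

lemma is_sol_polyT:
  assumes "is_sol n p lam u" "\<forall>k\<le>n-2. \<forall>x. p k (x + b) = p k x"
  shows "is_sol n p lam (polyT b q u)"
proof -
  have "\<forall>i\<in>{..degree q}. is_sol n p lam (\<lambda>x. u (x + real i * b))"
    using assms by (auto intro!: is_sol_shift per_mult)
  from is_sol_lincomb[OF _ this, of "coeff q"] show ?thesis
    by (simp add: polyT_def)
qed


lemma gronwall0:
  fixes E E' :: "real \<Rightarrow> real"
  assumes nn: "\<forall>x. E x \<ge> 0" and E0: "E 0 = 0" and dE: "\<forall>x. DERIV E x :> E' x"
    and bd: "\<forall>x\<in>{-R..R}. \<bar>E' x\<bar> \<le> C * E x" and x: "x \<in> {-R..R}"
  shows "E x = 0"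
proof (cases "x \<ge> 0")
  case True
  define F where "F t = E t * exp (- C * t)" for t
  have "F x \<le> F 0"
  proof (rule DERIV_nonpos_imp_nonincreasing[OF True])
    fix t assume t: "0 \<le> t" "t \<le> x"
    have D: "DERIV F t :> E' t * exp (- C * t) + E t * (exp (- C * t) * (- C))"
      unfolding F_def using dE by (auto intro!: derivative_eq_intros)
    have "t \<in> {-R..R}" using t x by auto
    then have "E' t \<le> C * E t" using bd by force
    then have "(E' t - C * E t) * exp (- C * t) \<le> 0"
      by (simp add: mult_nonpos_nonneg)
    then show "\<exists>y. DERIV F t :> y \<and> y \<le> 0"
      using D by (intro exI[of _ "E' t * exp (- C * t) + E t * (exp (- C * t) * (- C))"])
        (auto simp: algebra_simps)
  qed
  then have "E x * exp (- C * x) \<le> 0" using E0 by (simp add: F_def)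
  then have "E x \<le> 0" by (simp add: mult_le_0_iff)
  then show ?thesis using nn by (meson antisym)
next
  case False
  define G where "G t = E t * exp (C * t)" for t
  have "G x \<le> G 0"
  proof (rule DERIV_nonneg_imp_nondecreasing[OF less_imp_le[OF not_le[THEN iffD1, OF False]]])
    fix t assume t: "x \<le> t" "t \<le> 0"
    have D: "DERIV G t :> E' t * exp (C * t) + E t * (exp (C * t) * C)"
      unfolding G_def using dE by (auto intro!: derivative_eq_intros)
    have "t \<in> {-R..R}" using t x by auto
    then have "- E' t \<le> C * E t" using bd by force
    then have "(E' t + C * E t) * exp (C * t) \<ge> 0"
      by simp
    then show "\<exists>y. DERIV G t :> y \<and> y \<ge> 0"
      using D by (intro exI[of _ "E' t * exp (C * t) + E t * (exp (C * t) * C)"])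
        (auto simp: algebra_simps)
  qed
  then have "E x * exp (C * x) \<le> 0" using E0 by (simp add: G_def)
  then have "E x \<le> 0" by (simp add: mult_le_0_iff)
  then show ?thesis using nn by (meson antisym)
qed


lemma ode_unique:
  assumes sol: "is_sol n p lam u" and n2: "n \<ge> 2"
    and pc: "\<forall>k\<le>n-2. continuous_on UNIV (p k)"
    and init: "\<forall>k<n. vdiff k u 0 = 0"
  shows "u x0 = 0"
proof -
  define y where "y k = vdiff k u" for k
  define E where "E x = (\<Sum>k<n. inner (y k x) (y k x))" for x
  define E' where "E' x = (\<Sum>k<n. 2 * inner (y k x) (y (Suc k) x))" for x
  have vd: "(y k has_vector_derivative y (Suc k) x) (at x)" if "k < n" for k x
    using sol that unfolding is_sol_def y_def
    by (auto intro!: vector_derivative_works[THEN iffD1])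
  have dE: "\<forall>x. DERIV E x :> E' x"
  proof
    fix x
    have "((\<lambda>t. inner (y k t) (y k t)) has_real_derivative 2 * inner (y k x) (y (Suc k) x)) (at x)"
      if k: "k < n" for k
    proof -
      have d: "(y k has_derivative (\<lambda>h. h *\<^sub>R y (Suc k) x)) (at x)"
        using vd[OF k] by (simp add: has_vector_derivative_def)
      have "((\<lambda>t. inner (y k t) (y k t)) has_derivative
          (\<lambda>h. inner (y k x) (h *\<^sub>R y (Suc k) x) + inner (h *\<^sub>R y (Suc k) x) (y k x))) (at x)"
        using has_derivative_inner[OF d d] .
      moreover have "(\<lambda>h. inner (y k x) (h *\<^sub>R y (Suc k) x) + inner (h *\<^sub>R y (Suc k) x) (y k x))
          = (*) (2 * inner (y k x) (y (Suc k) x))"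
        by (auto simp: fun_eq_iff inner_commute algebra_simps)
      ultimately show ?thesis by (simp add: has_field_derivative_def)
    qed
    then show "DERIV E x :> E' x"
      unfolding E_def E'_def by (rule DERIV_sum) simp
  qed
  define R where "R = \<bar>x0\<bar>"
  have contf: "continuous_on {-R..R} (\<lambda>x. \<Sum>j\<le>n-2. cmod (p j x))"
  proof -
    have "\<forall>j\<le>n-2. continuous_on {-R..R} (p j)" using pc continuous_on_subset by blast
    then show ?thesis by (intro continuous_on_sum continuous_on_norm) auto
  qed
  obtain M where M: "\<forall>x\<in>{-R..R}. \<bar>\<Sum>j\<le>n-2. cmod (p j x)\<bar> \<le> M"
    using compact_imp_bounded[OF compact_continuous_image[OF contf compact_Icc]]
    unfolding bounded_iff by auto
  define K where "K = 1 + cmod lam + \<bar>M\<bar>"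
  have K1: "K \<ge> 1" by (simp add: K_def)
  have Enn: "\<forall>x. E x \<ge> 0" by (auto simp: E_def intro!: sum_nonneg)
  have bd: "\<forall>x\<in>{-R..R}. \<bar>E' x\<bar> \<le> (2 * n * K) * E x"
  proof
    fix x assume x: "x \<in> {-R..R}"
    define s where "s = sqrt (E x)"
    have s0: "s \<ge> 0" using Enn by (simp add: s_def)
    have ss: "s * s = E x" using Enn by (simp add: s_def)
    have yk: "norm (y k x) \<le> s" if "k < n" for k
    proof -
      have "inner (y k x) (y k x) \<le> E x"
        unfolding E_def by (rule member_le_sum) (use that in auto)
      then have "(norm (y k x))^2 \<le> E x" by (simp add: power2_norm_eq_inner)
      then show ?thesis unfolding s_def by (rule real_le_rsqrt)
    qed
    have yn: "norm (y n x) \<le> K * s"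
    proof -
      have "y n x = lam * y 0 x - (\<Sum>j\<le>n-2. p j x * y j x)"
      proof -
        have "vdiff n u x + (\<Sum>j\<le>n-2. p j x * vdiff j u x) = lam * u x"
          using sol by (simp add: is_sol_def)
        then show ?thesis by (simp add: y_def eq_diff_eq)
      qed
      then have "norm (y n x) \<le> norm (lam * y 0 x) + norm (\<Sum>j\<le>n-2. p j x * y j x)"
        by (metis norm_triangle_ineq4)
      also have "\<dots> \<le> cmod lam * s + (\<Sum>j\<le>n-2. cmod (p j x) * s)"
      proof (rule add_mono)
        show "norm (lam * y 0 x) \<le> cmod lam * s"
          using yk[of 0] n2 by (simp add: norm_mult mult_left_mono)
        have "norm (\<Sum>j\<le>n-2. p j x * y j x) \<le> (\<Sum>j\<le>n-2. norm (p j x * y j x))"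
          by (rule norm_sum)
        also have "\<dots> \<le> (\<Sum>j\<le>n-2. cmod (p j x) * s)"
          using yk n2 by (auto intro!: sum_mono simp: norm_mult mult_left_mono)
        finally show "norm (\<Sum>j\<le>n-2. p j x * y j x) \<le> (\<Sum>j\<le>n-2. cmod (p j x) * s)" .
      qed
      also have "\<dots> = (cmod lam + (\<Sum>j\<le>n-2. cmod (p j x))) * s"
        by (simp add: sum_distrib_right distrib_right)
      also have "\<dots> \<le> K * s"
      proof -
        have "\<bar>\<Sum>j\<le>n-2. cmod (p j x)\<bar> \<le> M" using M x by blast
        then have "(\<Sum>j\<le>n-2. cmod (p j x)) \<le> \<bar>M\<bar>" by linarith
        then show ?thesis using s0 unfolding K_def by (intro mult_right_mono) auto
      qed
      finally show ?thesis .
    qed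
    have ysk: "norm (y (Suc k) x) \<le> K * s" if "k < n" for k
    proof (cases "Suc k < n")
      case True
      then have "norm (y (Suc k) x) \<le> s" by (rule yk)
      also have "\<dots> \<le> K * s" using K1 s0 by (simp add: mult_le_cancel_right1)
      finally show ?thesis .
    next
      case False
      then have "Suc k = n" using that by simp
      then show ?thesis using yn by simp
    qed
    have "\<bar>E' x\<bar> \<le> (\<Sum>k<n. \<bar>2 * inner (y k x) (y (Suc k) x)\<bar>)"
      unfolding E'_def by (rule sum_abs)
    also have "\<dots> \<le> (\<Sum>k<n. 2 * (s * (K * s)))"
    proof (rule sum_mono)
      fix k assume k: "k \<in> {..<n}"
      have "\<bar>inner (y k x) (y (Suc k) x)\<bar> \<le> norm (y k x) * norm (y (Suc k) x)"
        by (rule Cauchy_Schwarz_ineq2)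
      also have "\<dots> \<le> s * (K * s)"
        using yk[of k] ysk[of k] k s0 by (auto intro!: mult_mono)
      finally show "\<bar>2 * inner (y k x) (y (Suc k) x)\<bar> \<le> 2 * (s * (K * s))" by simp
    qed
    also have "\<dots> = (2 * n * K) * E x" using ss by (simp add: algebra_simps)
    finally show "\<bar>E' x\<bar> \<le> (2 * n * K) * E x" .
  qed
  have E0: "E 0 = 0" using init by (simp add: E_def y_def)
  have "E x0 = 0"
    by (rule gronwall0[OF Enn E0 dE bd]) (auto simp: R_def)
  moreover have "inner (y 0 x0) (y 0 x0) \<le> E x0"
    unfolding E_def by (rule member_le_sum) (use n2 in auto)
  ultimately show ?thesis by (simp add: y_def flip: power2_norm_eq_inner)
qed


global_interpretation cv: vector_space "\<lambda>(c::complex) (v::'a \<Rightarrow> complex) k. c * v k"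
  by unfold_locales (simp_all add: fun_eq_iff algebra_simps)

lemma sum_fun_apply: "(\<Sum>i\<in>I. f i) t = (\<Sum>i\<in>I. f i t)"
  by (induction I rule: infinite_finite_induct) auto

lemma dep_cn:
  fixes w :: "nat \<Rightarrow> nat \<Rightarrow> complex"
  assumes sup: "\<forall>j k. n \<le> k \<longrightarrow> w j k = 0"
  shows "\<exists>c. (\<exists>j\<le>n. c j \<noteq> 0) \<and> (\<forall>k. (\<Sum>j\<le>n. c j * w j k) = 0)"
proof (cases "inj_on w {..n}")
  case False
  then obtain i j where ij: "i \<le> n" "j \<le> n" "i \<noteq> j" "w i = w j"
    unfolding inj_on_def by auto
  define c where "c t = (if t = i then 1 else if t = j then -1 else (0::complex))" for t
  have "(\<Sum>t\<le>n. c t * w t k) = 0" for k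
  proof -
    have "(\<Sum>t\<le>n. c t * w t k) = (\<Sum>t\<le>n. (if t = i then w t k else 0) + (if t = j then - w t k else 0))"
      by (rule sum.cong) (use ij in \<open>auto simp: c_def\<close>)
    also have "\<dots> = w i k - w j k"
      using ij by (simp add: sum.distrib)
    finally show ?thesis using ij by simp
  qed
  moreover have "c i \<noteq> 0" by (simp add: c_def)
  ultimately show ?thesis using ij by blast
next
  case True
  define A where "A = w ` {..n}"
  define S where "S = (\<lambda>k t. if t = k then 1 else (0::complex)) ` {..<n}"
  have cardA: "card A = Suc n" using True by (simp add: A_def card_image)
  have fS: "finite S" and cardS: "card S \<le> n"
    unfolding S_def by (auto intro: card_image_le[of "{..<n}", simplified])
  have "A \<subseteq> cv.span S"
  proof
    fix v assume "v \<in> A"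
    then obtain j where v: "v = w j" by (auto simp: A_def)
    have "v = (\<Sum>k\<in>{..<n}. (\<lambda>t. w j k * (if t = k then 1 else 0)))"
    proof
      fix t
      show "v t = (\<Sum>k\<in>{..<n}. (\<lambda>t. w j k * (if t = k then 1 else 0))) t"
        unfolding sum_fun_apply using sup by (cases "t < n") (auto simp: v if_distrib cong: if_cong)
    qed
    also have "\<dots> \<in> cv.span S"
    proof (rule cv.span_sum)
      fix k assume "k \<in> {..<n}"
      then have e: "(\<lambda>t. if t = k then 1 else (0::complex)) \<in> S" by (auto simp: S_def)
      show "(\<lambda>t. w j k * (if t = k then 1 else 0)) \<in> cv.span S"
        using cv.span_scale[OF cv.span_base[OF e], of "w j k"] by simp
    qed
    finally show "v \<in> cv.span S" .
  qed
  have "cv.dependent A"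
  proof (rule ccontr)
    assume "cv.independent A"
    from cv.independent_span_bound[OF fS this \<open>A \<subseteq> cv.span S\<close>] cardA cardS show False by simp
  qed
  then obtain u where u: "\<exists>v\<in>A. u v \<noteq> 0" "(\<Sum>v\<in>A. (\<lambda>k. u v * v k)) = 0"
    using cv.dependent_finite[of A] by (auto simp: A_def)
  define c where "c j = u (w j)" for j
  have "(\<Sum>j\<le>n. c j * w j k) = 0" for k
  proof -
    have "(\<Sum>j\<le>n. c j * w j k) = (\<Sum>v\<in>A. u v * v k)"
      unfolding A_def c_def by (subst sum.reindex[OF True]) simp
    also have "\<dots> = (\<Sum>v\<in>A. (\<lambda>k. u v * v k)) k" by (simp add: sum_fun_apply)
    also have "\<dots> = 0" using u(2) by simp
    finally show ?thesis .
  qed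
  moreover obtain j where "j \<le> n" "c j \<noteq> 0" using u(1) by (auto simp: A_def c_def)
  ultimately show ?thesis by blast
qed

lemma dep_sol:
  assumes n2: "n \<ge> 2" and pc: "\<forall>k\<le>n-2. continuous_on UNIV (p k)"
    and sols: "\<forall>j\<le>N. is_sol n p lam (f j)" and Nn: "N = n"
  shows "\<exists>c. (\<exists>j\<le>N. c j \<noteq> 0) \<and> (\<forall>x. (\<Sum>j\<le>N. c j * f j x) = 0)"
proof -
  define w where "w j k = (if k < n then vdiff k (f j) 0 else 0)" for j k
  obtain c where c: "\<exists>j\<le>n. c j \<noteq> 0" "\<forall>k. (\<Sum>j\<le>n. c j * w j k) = 0"
    using dep_cn[of n w] by (auto simp: w_def)
  define g where "g x = (\<Sum>j\<le>n. c j * f j x)" for x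
  have gs: "is_sol n p lam g"
    unfolding g_def by (rule is_sol_lincomb) (use sols Nn in auto)
  have "vdiff k g 0 = 0" if k: "k < n" for k
  proof -
    have "vdiff k g = (\<lambda>x. \<Sum>j\<le>n. c j * vdiff k (f j) x)"
      unfolding g_def by (rule vdiff_lincomb) (use sols Nn k in \<open>auto simp: is_sol_def\<close>)
    then have "vdiff k g 0 = (\<Sum>j\<le>n. c j * w j k)" using k by (simp add: w_def)
    then show ?thesis using c(2) by simp
  qed
  then have "\<forall>x. g x = 0" using ode_unique[OF gs n2 pc] by blast
  then show ?thesis using c(1) Nn by (auto simp: g_def)
qed


lemma annih:
  assumes n2: "n \<ge> 2" and pc: "\<forall>k\<le>n-2. continuous_on UNIV (p k)"
    and pper: "\<forall>k\<le>n-2. \<forall>x. p k (x + b) = p k x"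
    and sol: "is_sol n p lam u"
  shows "\<exists>q. q \<noteq> 0 \<and> degree q \<le> n \<and> polyT b q u = (\<lambda>x. 0)"
proof -
  define f where "f j x = u (x + real j * b)" for j x
  have "\<forall>j\<le>n. is_sol n p lam (f j)"
    unfolding f_def using sol pper by (auto intro!: is_sol_shift per_mult)
  from dep_sol[OF n2 pc this refl] obtain c where
    c: "\<exists>j\<le>n. c j \<noteq> 0" "\<forall>x. (\<Sum>j\<le>n. c j * f j x) = 0" by blast
  define q where "q = (\<Sum>j\<le>n. monom (c j) j)"
  have cq: "coeff q i = (if i \<le> n then c i else 0)" for i
    unfolding q_def coeff_sum by (simp add: sum.delta' cong: if_cong)
  have dq: "degree q \<le> n" by (rule degree_le) (simp add: cq)
  have "q \<noteq> 0" using c(1) cq by (metis coeff_0)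
  moreover have "polyT b q u = (\<lambda>x. 0)"
  proof
    fix x
    have "polyT b q u x = (\<Sum>i\<le>n. coeff q i * u (x + real i * b))" by (rule polyT_sum[OF dq])
    also have "\<dots> = (\<Sum>j\<le>n. c j * f j x)" by (simp add: cq f_def)
    finally show "polyT b q u x = 0" using c(2) by simp
  qed
  ultimately show ?thesis using dq by blast
qed

lemma recur:
  assumes q: "q \<noteq> 0" "degree q \<le> n" and ann: "polyT b q u = (\<lambda>x. 0)"
    and z: "\<forall>j<n. u (real j * b) = 0"
  shows "u (real k * b) = 0"
proof (induction k rule: less_induct)
  case (less k)
  show ?case
  proof (cases "k < n")
    case True then show ?thesis using z by simp
  next
    case False
    define d where "d = degree q"
    define m where "m = k - d"
    have km: "k = m + d" using False q(2) by (simp add: m_def d_def)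
    have "0 = polyT b q u (real m * b)" using ann by simp
    also have "\<dots> = (\<Sum>i\<le>d. coeff q i * u (real (m + i) * b))"
      by (simp add: polyT_def d_def algebra_simps)
    also have "\<dots> = (\<Sum>i<d. coeff q i * u (real (m + i) * b)) + coeff q d * u (real k * b)"
      by (simp add: lessThan_Suc_atMost[symmetric] km)
    also have "(\<Sum>i<d. coeff q i * u (real (m + i) * b)) = 0"
    proof (rule sum.neutral, intro ballI)
      fix i assume "i \<in> {..<d}"
      then have "m + i < k" using km by simp
      then show "coeff q i * u (real (m + i) * b) = 0" using less.IH[of "m+i"] by simp
    qed
    finally have "coeff q d * u (real k * b) = 0" by simp
    moreover have "coeff q d \<noteq> 0" using q(1) by (simp add: d_def)
    ultimately show ?thesis by simp
  qed
qed

lemma eig_all: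
  assumes n2: "n \<ge> 2" and pc: "\<forall>k\<le>n-2. continuous_on UNIV (p k)"
    and pper: "\<forall>k\<le>n-2. \<forall>x. p k (x + b) = p k x"
    and u: "u \<in> eigspace n p b lam"
  shows "u (real k * b) = 0"
proof -
  from u have sol: "is_sol n p lam u" and z: "\<forall>j<n. u (real j * b) = 0"
    by (auto simp: eigspace_def)
  obtain q where "q \<noteq> 0" "degree q \<le> n" "polyT b q u = (\<lambda>x. 0)"
    using annih[OF n2 pc pper sol] by blast
  from recur[OF this z] show ?thesis .
qed

lemma polyT_eig:
  assumes n2: "n \<ge> 2" and pc: "\<forall>k\<le>n-2. continuous_on UNIV (p k)"
    and pper: "\<forall>k\<le>n-2. \<forall>x. p k (x + b) = p k x"
    and u: "u \<in> eigspace n p b lam"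
  shows "polyT b q u \<in> eigspace n p b lam"
proof -
  have sol: "is_sol n p lam u" using u by (auto simp: eigspace_def)
  have "polyT b q u (real j * b) = 0" for j
  proof -
    have "polyT b q u (real j * b) = (\<Sum>i\<le>degree q. coeff q i * u (real (j + i) * b))"
      by (simp add: polyT_def algebra_simps)
    also have "\<dots> = 0"
    proof (rule sum.neutral, intro ballI)
      fix i
      show "coeff q i * u (real (j + i) * b) = 0" using eig_all[OF n2 pc pper u, of "j+i"] by simp
    qed
    finally show ?thesis .
  qed
  then show ?thesis using is_sol_polyT[OF sol pper] by (auto simp: eigspace_def)
qed


lemma floquet_ge1: "floquet n p b lam r l u \<Longrightarrow> l \<ge> 1"
  by (induction rule: floquet.induct) auto

lemma polyT_lin: "polyT b [:-r, 1:] u x = u (x + b) - r * u x"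
  by (simp add: polyT_def)

lemma gen_floquet:
  assumes pper: "\<forall>k\<le>n-2. \<forall>x. p k (x + b) = p k x"
  shows "is_sol n p lam u \<Longrightarrow> u \<noteq> (\<lambda>x. 0) \<Longrightarrow> polyT b ([:-r,1:]^k) u = (\<lambda>x. 0)
    \<Longrightarrow> \<exists>l. floquet n p b lam r l u"
proof (induction k arbitrary: u)
  case 0
  then show ?case by simp
next
  case (Suc k)
  define v where "v = polyT b [:-r,1:] u"
  show ?case
  proof (cases "v = (\<lambda>x. 0)")
    case True
    then have "\<forall>x. u (x + b) = r * u x"
      unfolding v_def by (metis polyT_lin right_minus_eq)
    then show ?thesis using Suc.prems by (blast intro: floquet.rank1)
  next
    case False
    have vs: "is_sol n p lam v" unfolding v_def by (rule is_sol_polyT[OF Suc.prems(1) pper])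
    have "polyT b ([:-r,1:]^k) v = polyT b ([:-r,1:]^k * [:-r,1:]) u"
      by (simp only: v_def polyT_mult)
    also have "\<dots> = (\<lambda>x. 0)" using Suc.prems(3) by (simp add: power_Suc2)
    finally obtain l where fl: "floquet n p b lam r l v" using Suc.IH[OF vs False] by blast
    have "\<forall>x. u (x + b) = r * u x + v x" by (simp add: v_def polyT_lin)
    then show ?thesis using floquet.rankSuc[OF Suc.prems(1) fl floquet_ge1[OF fl]] by blast
  qed
qed

definition GE :: "nat \<Rightarrow> (nat \<Rightarrow> real \<Rightarrow> complex) \<Rightarrow> real \<Rightarrow> complex \<Rightarrow> (real \<Rightarrow> complex) set" where
  "GE n p b lam = {w \<in> eigspace n p b lam. \<exists>r k. polyT b ([:-r,1:]^k) w = (\<lambda>x. 0)}"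

lemma decomp:
  assumes n2: "n \<ge> 2" and pc: "\<forall>k\<le>n-2. continuous_on UNIV (p k)"
    and pper: "\<forall>k\<le>n-2. \<forall>x. p k (x + b) = p k x"
  shows "w \<in> eigspace n p b lam \<Longrightarrow> q \<noteq> 0 \<Longrightarrow> polyT b q w = (\<lambda>x. 0) \<Longrightarrow> w \<in> cv.span (GE n p b lam)"
proof (induction "degree q" arbitrary: q w rule: less_induct)
  case less
  show ?case
  proof (cases "degree q = 0")
    case True
    then obtain a where qa: "q = [:a:]" by (metis degree_eq_zeroE)
    then have "a \<noteq> 0" using less.prems by simp
    moreover have "a * w x = 0" for x using less.prems(3) qa polyT_const by metis
    ultimately have "w = 0" by (auto simp: fun_eq_iff)
    then show ?thesis by (simp add: cv.span_zero)
  next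
    case False
    then obtain r where "poly q r = 0"
      using fundamental_theorem_of_algebra[of q] constant_degree[of q] by auto
    define m where "m = order r q"
    have m1: "m \<noteq> 0" using \<open>poly q r = 0\<close> less.prems(2) order_root m_def by blast
    obtain s where qs: "q = [:-r,1:]^m * s" and nd: "\<not> [:-r,1:] dvd s"
      using order_decomp[OF less.prems(2), of r] m_def by blast
    have s0: "s \<noteq> 0" using nd by auto
    define L where "L = [:-r,1::complex:]^m"
    have "coprime [:-r,1::complex:] s"
      using nd by (metis prime_elem_imp_coprime prime_elem_linear_field_poly one_neq_zero)
    then have "coprime L s" by (simp add: L_def)
    then have "gcd L s = 1" by simp
    then obtain a c where ac: "a * L + c * s = 1"
      using bezout_coefficients_fst_snd[of L s] by metis
    define w1 where "w1 = polyT b (c * s) w"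
    define w2 where "w2 = polyT b (a * L) w"
    have we: "w = w1 + w2"
    proof
      fix x
      have "w x = polyT b (a * L + c * s) w x" using ac by simp
      then show "w x = (w1 + w2) x" by (simp add: polyT_add w1_def w2_def)
    qed
    have q_eq: "q = L * s" using qs L_def by simp
    have "polyT b L w1 = polyT b (c * q) w"
      unfolding w1_def polyT_mult[symmetric] q_eq by (simp add: ac_simps)
    also have "\<dots> = (\<lambda>x. 0)" by (simp add: polyT_mult less.prems(3))
    finally have "w1 \<in> GE n p b lam"
      unfolding GE_def L_def w1_def using polyT_eig[OF n2 pc pper less.prems(1)] by blast
    then have s1: "w1 \<in> cv.span (GE n p b lam)" by (rule cv.span_base)
    have "polyT b s w2 = polyT b (a * q) w"
      unfolding w2_def polyT_mult[symmetric] q_eq by (simp add: ac_simps)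
    also have "\<dots> = (\<lambda>x. 0)" by (simp add: polyT_mult less.prems(3))
    finally have ann2: "polyT b s w2 = (\<lambda>x. 0)" .
    have "degree q = m + degree s"
      using s0 by (simp add: qs degree_mult_eq degree_power_eq)
    then have "degree s < degree q" using m1 by simp
    moreover have "w2 \<in> eigspace n p b lam" unfolding w2_def by (rule polyT_eig[OF n2 pc pper less.prems(1)])
    ultimately have s2: "w2 \<in> cv.span (GE n p b lam)" using less.hyps s0 ann2 by blast
    show ?thesis using cv.span_add[OF s1 s2] we by simp
  qed
qed


lemma sum_set_list: "distinct xs \<Longrightarrow> sum g (set xs) = (\<Sum>i<length xs. g (xs ! i))"
  by (simp add: sum.distinct_set_conv_list sum_list_sum_nth atLeast0LessThan)

lemma comb_list:
  fixes c :: "nat \<Rightarrow> complex"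
  assumes d: "distinct ys"
  defines "u \<equiv> (\<lambda>v. \<Sum>j<length ys. if ys ! j = v then c j else (0::complex))"
  shows "\<forall>j<length ys. u (ys ! j) = c j"
    and "(\<Sum>v\<in>set ys. (\<lambda>x. u v * v x)) = (\<lambda>x. \<Sum>j<length ys. c j * (ys ! j) x)"
proof -
  show uj: "\<forall>j<length ys. u (ys ! j) = c j"
  proof (intro allI impI)
    fix j assume j: "j < length ys"
    have "u (ys ! j) = (\<Sum>i<length ys. if i = j then c i else 0)"
      unfolding u_def by (rule sum.cong) (use d j in \<open>auto simp: nth_eq_iff_index_eq\<close>)
    then show "u (ys ! j) = c j" using j by simp
  qed
  show "(\<Sum>v\<in>set ys. (\<lambda>x. u v * v x)) = (\<lambda>x. \<Sum>j<length ys. c j * (ys ! j) x)"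
    unfolding sum_set_list[OF d] by (auto simp: fun_eq_iff sum_fun_apply uj)
qed

lemma indep_len:
  assumes n2: "n \<ge> 2" and pc: "\<forall>k\<le>n-2. continuous_on UNIV (p k)"
    and ind: "cv.independent B" and sols: "\<forall>v\<in>B. is_sol n p lam v"
    and d: "distinct xs" and sx: "set xs \<subseteq> B"
  shows "length xs \<le> n"
proof (rule ccontr)
  assume "\<not> length xs \<le> n"
  define ys where "ys = take (Suc n) xs"
  have ly: "length ys = Suc n" using \<open>\<not> length xs \<le> n\<close> by (simp add: ys_def)
  have dy: "distinct ys" using d by (simp add: ys_def)
  have sy: "set ys \<subseteq> B" using sx set_take_subset[of "Suc n" xs] by (auto simp: ys_def)
  have "\<forall>j\<le>n. is_sol n p lam (ys ! j)" using sy sols ly by (metis le_imp_less_Suc nth_mem subsetD)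
  from dep_sol[OF n2 pc this refl] obtain c where
    c: "\<exists>j\<le>n. c j \<noteq> 0" "\<forall>x. (\<Sum>j\<le>n. c j * (ys ! j) x) = 0" by blast
  define u where "u = (\<lambda>v. \<Sum>j<length ys. if ys ! j = v then c j else (0::complex))"
  note cl = comb_list[OF dy, of c]
  have e: "(\<Sum>v\<in>set ys. (\<lambda>x. u v * v x)) = (\<lambda>x. \<Sum>j<length ys. c j * (ys ! j) x)"
    unfolding u_def by (rule cl(2))
  have "(\<lambda>x. \<Sum>j<length ys. c j * (ys ! j) x) = 0"
    using c(2) ly by (simp add: lessThan_Suc_atMost fun_eq_iff)
  then have "(\<Sum>v\<in>set ys. (\<lambda>x. u v * v x)) = 0" by (simp only: e)
  moreover have "\<exists>v\<in>set ys. u v \<noteq> 0"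
    using c(1) cl(1) ly unfolding u_def by (metis le_imp_less_Suc nth_mem)
  ultimately have "cv.dependent (set ys)"
    using cv.dependent_finite[of "set ys"] by auto
  then show False using cv.independent_mono[OF ind sy] by blast
qed


theorem theorem3:
  fixes n :: nat and b :: real and p :: "nat \<Rightarrow> real \<Rightarrow> complex" and \<mu> :: complex
  assumes n2: "n \<ge> 2" and bpos: "b > 0"
    and psmooth: "\<forall>k\<le>n-2. smooth_fun (p k)"
    and pper: "\<forall>k\<le>n-2. \<forall>x. p k (x + b) = p k x"
    and eig: "\<exists>u\<in>eigspace n p b \<mu>. u \<noteq> (\<lambda>x. 0)"
  shows "(\<exists>m::nat. \<exists>\<psi>::nat \<Rightarrow> real \<Rightarrow> complex.
            (\<forall>i<m. \<psi> i \<in> eigspace n p b \<mu> \<and> (\<exists>r l. floquet n p b \<mu> r l (\<psi> i))) \<and>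
            (\<forall>c::nat \<Rightarrow> complex. (\<forall>x. (\<Sum>i<m. c i * \<psi> i x) = 0) \<longrightarrow> (\<forall>i<m. c i = 0)) \<and>
            (\<forall>u\<in>eigspace n p b \<mu>. \<exists>c::nat \<Rightarrow> complex. \<forall>x. u x = (\<Sum>i<m. c i * \<psi> i x)))
       \<and> (\<forall>r l \<psi> \<phi>. l \<ge> 2 \<and> floquet n p b \<mu> r l \<psi> \<and> \<psi> \<in> eigspace n p b \<mu> \<and>
            floquet n p b \<mu> r (l - 1) \<phi> \<and> (\<forall>x. \<psi> (x + b) = r * \<psi> x + \<phi> x)
            \<longrightarrow> \<phi> \<in> eigspace n p b \<mu>)"
proof -
  have pc: "\<forall>k\<le>n-2. continuous_on UNIV (p k)"
  proof (intro allI impI)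
    fix k assume "k \<le> n - 2"
    then have "\<forall>x. p k differentiable (at x)"
      using psmooth unfolding smooth_fun_def by (metis vdiff.simps(1))
    then show "continuous_on UNIV (p k)"
      by (simp add: continuous_at_imp_continuous_on differentiable_imp_continuous_within)
  qed
  let ?D = "eigspace n p b \<mu>"
  let ?G = "GE n p b \<mu>"
  obtain B where B: "B \<subseteq> ?G" "cv.independent B" "?G \<subseteq> cv.span B"
    using cv.maximal_independent_subset[of ?G] by blast
  have BD: "B \<subseteq> ?D" using B(1) by (auto simp: GE_def)
  have sols: "\<forall>v\<in>B. is_sol n p \<mu> v" using BD by (auto simp: eigspace_def)
  have finB: "finite B"
  proof (rule ccontr)
    assume "infinite B"
    then obtain F where F: "finite F" "card F = Suc n" "F \<subseteq> B"
      using infinite_arbitrarily_large by blast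
    obtain xs where xs: "set xs = F" "distinct xs" using finite_distinct_list[OF F(1)] by blast
    have "length xs \<le> n" by (rule indep_len[OF n2 pc B(2) sols xs(2)]) (use xs F in auto)
    moreover have "length xs = Suc n" using distinct_card[OF xs(2)] xs(1) F(2) by simp
    ultimately show False by simp
  qed
  obtain xs where xs: "set xs = B" "distinct xs" using finite_distinct_list[OF finB] by blast
  define m where "m = length xs"
  define \<psi> where "\<psi> i = xs ! i" for i
  have DB: "?D \<subseteq> cv.span B"
  proof
    fix w assume w: "w \<in> ?D"
    then have "is_sol n p \<mu> w" by (simp add: eigspace_def)
    then obtain q where "q \<noteq> 0" "polyT b q w = (\<lambda>x. 0)"
      using annih[OF n2 pc pper] by blast
    then have "w \<in> cv.span ?G" using decomp[OF n2 pc pper w] by blast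
    also have "cv.span ?G \<subseteq> cv.span B"
      using B(3) by (rule cv.span_minimal) simp
    finally show "w \<in> cv.span B" .
  qed
  have P1: "\<forall>i<m. \<psi> i \<in> ?D \<and> (\<exists>r l. floquet n p b \<mu> r l (\<psi> i))"
  proof (intro allI impI)
    fix i assume "i < m"
    then have inB: "\<psi> i \<in> B" using xs by (auto simp: \<psi>_def m_def)
    then have G: "\<psi> i \<in> ?G" using B(1) by auto
    then obtain r k where rk: "polyT b ([:-r,1:]^k) (\<psi> i) = (\<lambda>x. 0)" by (auto simp: GE_def)
    have "\<psi> i \<noteq> 0"
    proof
      assume "\<psi> i = 0"
      then have "0 \<in> B" using inB by simp
      from cv.dependent_zero[OF this] B(2) show False by simp
    qed
    then have nz: "\<psi> i \<noteq> (\<lambda>x. 0)" by (simp add: zero_fun_def)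
    have "is_sol n p \<mu> (\<psi> i)" using inB sols by blast
    from gen_floquet[OF pper this nz rk] show "\<psi> i \<in> ?D \<and> (\<exists>r l. floquet n p b \<mu> r l (\<psi> i))"
      using inB BD by blast
  qed
  have P2: "\<forall>c::nat \<Rightarrow> complex. (\<forall>x. (\<Sum>i<m. c i * \<psi> i x) = 0) \<longrightarrow> (\<forall>i<m. c i = 0)"
  proof (intro allI impI)
    fix c :: "nat \<Rightarrow> complex" and i
    assume z: "\<forall>x. (\<Sum>i<m. c i * \<psi> i x) = 0" and i: "i < m"
    define u where "u = (\<lambda>v. \<Sum>j<length xs. if xs ! j = v then c j else (0::complex))"
    note cl = comb_list[OF xs(2), of c]
    have e: "(\<Sum>v\<in>set xs. (\<lambda>x. u v * v x)) = (\<lambda>x. \<Sum>j<length xs. c j * (xs ! j) x)"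
      unfolding u_def by (rule cl(2))
    have "(\<lambda>x. \<Sum>j<length xs. c j * (xs ! j) x) = 0"
      using z by (simp add: fun_eq_iff m_def \<psi>_def)
    then have "(\<Sum>v\<in>set xs. (\<lambda>x. u v * v x)) = 0" by (simp only: e)
    moreover have "\<not> cv.dependent (set xs)" using B(2) xs(1) by simp
    ultimately have "\<forall>v\<in>set xs. u v = 0"
      using cv.dependent_finite[of "set xs"] by blast
    moreover have "xs ! i \<in> set xs" using i by (simp add: m_def)
    ultimately have "u (xs ! i) = 0" by blast
    moreover have "u (xs ! i) = c i" using cl(1) i unfolding u_def m_def by blast
    ultimately show "c i = 0" by simp
  qed
  have P3: "\<forall>u\<in>?D. \<exists>c::nat \<Rightarrow> complex. \<forall>x. u x = (\<Sum>i<m. c i * \<psi> i x)"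
  proof
    fix w assume "w \<in> ?D"
    then have "w \<in> cv.span B" using DB by blast
    then obtain u where u: "w = (\<Sum>v\<in>B. (\<lambda>x. u v * v x))"
      using cv.span_finite[OF finB] by auto
    have "w = (\<lambda>x. \<Sum>i<m. u (\<psi> i) * \<psi> i x)"
      unfolding u xs(1)[symmetric] sum_set_list[OF xs(2)]
      by (simp add: fun_eq_iff sum_fun_apply m_def \<psi>_def)
    then show "\<exists>c::nat \<Rightarrow> complex. \<forall>x. w x = (\<Sum>i<m. c i * \<psi> i x)" by metis
  qed
  have P4: "\<forall>r l \<psi> \<phi>. l \<ge> 2 \<and> floquet n p b \<mu> r l \<psi> \<and> \<psi> \<in> ?D \<and>
            floquet n p b \<mu> r (l - 1) \<phi> \<and> (\<forall>x. \<psi> (x + b) = r * \<psi> x + \<phi> x)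
            \<longrightarrow> \<phi> \<in> ?D"
  proof (intro allI impI)
    fix r l \<psi> \<phi>
    assume a: "l \<ge> 2 \<and> floquet n p b \<mu> r l \<psi> \<and> \<psi> \<in> ?D \<and>
            floquet n p b \<mu> r (l - 1) \<phi> \<and> (\<forall>x. \<psi> (x + b) = r * \<psi> x + \<phi> x)"
    then have "\<phi> = polyT b [:-r,1:] \<psi>" by (auto simp: fun_eq_iff polyT_lin)
    then show "\<phi> \<in> ?D" using polyT_eig[OF n2 pc pper] a by blast
  qed
  show ?thesis using P1 P2 P3 P4 by blast
qed

end
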